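(* Let $\mathcal{T}=(\mathcal{V},\mathcal{E})$ obey the LC-PF model and covariance assumption of the context. Let $r_{\min},x_{\min}$ be the minimum line resistance and reactance in $\mathcal{T}$, and set $k_1=\min(r_{\min}^2,x_{\min}^2)\min_{d}\big(\Omega_p(d,d)+\Omega_q(d,d)+2\Omega_{pq}(d,d)\big)$, the inner minimum being over non-root nodes $d$. Then for every node $a$ and every node $b\neq a$ with $(ab)\notin\mathcal{E}$, the neighbor $c$ of $a$ on the path from $a$ to $b$ (so $(ac)\in\mathcal{E}$) satisfies $\phi_{ab}\ge\phi_{ac}+k_1$.
   Context: $\mathcal{T}=(\mathcal{V},\mathcal{E})$ is a tree with a distinguished root (substation) of degree one. Each edge $(ab)$ has resistance $r_{ab}>0$ and reactance $x_{ab}>0$. Let $H_{1/r},H_{1/x}$ be the weighted Laplacians with edge weights $1/r_{ab}$, $1/x_{ab}$, with the root row and column removed. Non-root nodes have random injections $p_a,q_a$. The LC-PF model gives $v=H_{1/r}^{-1}p+H_{1/x}^{-1}q$ and $\theta=H_{1/x}^{-1}p-H_{1/r}^{-1}q$ at non-root nodes; the root voltage is constant. Covariance assumption: $\Omega_p,\Omega_q$ are the covariances of $p,q$, and $\Omega_{pq}=\mathbb{E}[(p-\mathbb{E}p)(q-\mathbb{E}q)^T]=\Omega_{qp}^T$. For distinct non-root $a,b$, $\Omega_p(a,b)=\Omega_q(a,b)=\Omega_{qp}(a,b)=0$, and $\Omega_{qp}(a,a)\ge0$. Define $\phi_{ab}=\mathbb{E}[((v_a-\mathbb{E}v_a)-(v_b-\mathbb{E}v_b))^2]$.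 *)

theory Defs
  imports "HOL-Probability.Probability"
begin

definition adj :: "'v set set \<Rightarrow> 'v \<Rightarrow> 'v \<Rightarrow> bool" where
  "adj E a b \<longleftrightarrow> a \<noteq> b \<and> {a, b} \<in> E"

definition is_tree :: "'v set \<Rightarrow> 'v set set \<Rightarrow> bool" where
  "is_tree V E \<longleftrightarrow> finite V \<and> V \<noteq> {}
     \<and> (\<forall>e\<in>E. \<exists>a\<in>V. \<exists>b\<in>V. a \<noteq> b \<and> e = {a, b})
     \<and> (\<forall>a\<in>V. \<forall>b\<in>V. (a, b) \<in> {(x, y). adj E x y}\<^sup>*)
     \<and> card E + 1 = card V"

definition simple_path :: "'v set set \<Rightarrow> 'v list \<Rightarrow> bool" where
  "simple_path E ps \<longleftrightarrow> ps \<noteq> [] \<and> distinct ps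
     \<and> (\<forall>i. Suc i < length ps \<longrightarrow> adj E (ps ! i) (ps ! Suc i))"

definition laplacian_w ::
  "'v set \<Rightarrow> 'v set set \<Rightarrow> ('v set \<Rightarrow> real) \<Rightarrow> 'v \<Rightarrow> 'v \<Rightarrow> real" where
  "laplacian_w V E w a b =
     (if a = b then (\<Sum>c\<in>V. if adj E a c then 1 / w {a, c} else 0)
      else if adj E a b then - (1 / w {a, b}) else 0)"

definition mat_inv_on :: "'v set \<Rightarrow> ('v \<Rightarrow> 'v \<Rightarrow> real) \<Rightarrow> 'v \<Rightarrow> 'v \<Rightarrow> real" where
  "mat_inv_on N H = (THE G. (\<forall>a\<in>N. \<forall>b\<in>N. (\<Sum>c\<in>N. H a c * G c b) = (if a = b then 1 else 0))
                          \<and> (\<forall>a b. a \<notin> N \<or> b \<notin> N \<longrightarrow> G a b = 0))"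

definition Hinv :: "'v set \<Rightarrow> 'v set set \<Rightarrow> 'v \<Rightarrow> ('v set \<Rightarrow> real) \<Rightarrow> 'v \<Rightarrow> 'v \<Rightarrow> real" where
  "Hinv V E rt w = mat_inv_on (V - {rt}) (laplacian_w V E w)"

definition cov :: "'w measure \<Rightarrow> ('w \<Rightarrow> real) \<Rightarrow> ('w \<Rightarrow> real) \<Rightarrow> real" where
  "cov M X Y = integral\<^sup>L M (\<lambda>\<omega>. (X \<omega> - integral\<^sup>L M X) * (Y \<omega> - integral\<^sup>L M Y))"

definition lcpf_v ::
  "'v set \<Rightarrow> 'v set set \<Rightarrow> 'v \<Rightarrow> ('v set \<Rightarrow> real) \<Rightarrow> ('v set \<Rightarrow> real) \<Rightarrow> real
    \<Rightarrow> ('v \<Rightarrow> 'w \<Rightarrow> real) \<Rightarrow> ('v \<Rightarrow> 'w \<Rightarrow> real) \<Rightarrow> 'v \<Rightarrow> 'w \<Rightarrow> real" where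
  "lcpf_v V E rt r x v0 p q a \<omega> =
     (if a = rt then v0
      else (\<Sum>d\<in>V - {rt}. Hinv V E rt r a d * p d \<omega> + Hinv V E rt x a d * q d \<omega>))"

definition phi :: "'w measure \<Rightarrow> ('v \<Rightarrow> 'w \<Rightarrow> real) \<Rightarrow> 'v \<Rightarrow> 'v \<Rightarrow> real" where
  "phi M v a b = integral\<^sup>L M (\<lambda>\<omega>. ((v a \<omega> - integral\<^sup>L M (v a)) - (v b \<omega> - integral\<^sup>L M (v b)))\<^sup>2)"

end

theory Submission
  imports Defs
begin

definition adjrel :: "'v set set \<Rightarrow> ('v \<times> 'v) set" where
  "adjrel F = {(a,b). adj F a b}"

lemma adj_sym: "adj F a b \<Longrightarrow> adj F b a"
  unfolding adj_def by (metis insert_commute)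

lemma sym_adjrel: "sym (adjrel F)"
  unfolding adjrel_def by (rule symI) (simp add: adj_sym)

lemma rtr_sym: "(a,b) \<in> (adjrel F)\<^sup>* \<Longrightarrow> (b,a) \<in> (adjrel F)\<^sup>*"
  using sym_rtrancl[OF sym_adjrel[of F]] by (rule symD)

lemma conn_bound:
  assumes fin: "finite V" and edges: "\<forall>e\<in>F. \<exists>a\<in>V. \<exists>b\<in>V. a \<noteq> b \<and> e = {a,b}"
    and rt: "rt \<in> V" and conn: "\<forall>y\<in>V. (y, rt) \<in> (adjrel F)\<^sup>*"
  shows "card V \<le> card F + 1"
proof -
  define R where "R = adjrel F"
  define dist where "dist y = (LEAST n. (y, rt) \<in> R ^^ n)" for y
  have ex: "\<exists>z. adj F y z \<and> dist z < dist y" if y: "y \<in> V" "y \<noteq> rt" for y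
  proof -
    from conn y have "(y,rt) \<in> R\<^sup>*" unfolding R_def by auto
    then obtain n where n: "(y,rt) \<in> R ^^ n" using rtrancl_power by blast
    hence dn: "(y, rt) \<in> R ^^ dist y" unfolding dist_def by (rule LeastI)
    have "dist y \<noteq> 0"
    proof
      assume "dist y = 0"
      with dn have "(y,rt) \<in> R ^^ 0" by simp
      then show False using y by simp
    qed
    then obtain m where m: "dist y = Suc m" by (cases "dist y") auto
    with dn obtain z where z: "(y,z) \<in> R" "(z,rt) \<in> R ^^ m" using relpow_Suc_D2 by metis
    hence "dist z \<le> m" unfolding dist_def by (simp add: Least_le)
    with z m show ?thesis unfolding R_def adjrel_def by auto
  qed
  define f where "f y = (SOME e. \<exists>z. e = {y,z} \<and> adj F y z \<and> dist z < dist y)" for y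
  have f: "\<exists>z. f y = {y,z} \<and> adj F y z \<and> dist z < dist y" if "y \<in> V - {rt}" for y
  proof -
    from ex[of y] that obtain z where "adj F y z \<and> dist z < dist y" by auto
    hence "\<exists>e. \<exists>z. e = {y,z} \<and> adj F y z \<and> dist z < dist y" by blast
    from someI_ex[OF this] show ?thesis unfolding f_def .
  qed
  have inj: "inj_on f (V - {rt})"
  proof (rule inj_onI)
    fix y1 y2 assume y: "y1 \<in> V - {rt}" "y2 \<in> V - {rt}" "f y1 = f y2"
    from f[OF y(1)] obtain z1 where z1: "f y1 = {y1,z1}" "adj F y1 z1" "dist z1 < dist y1" by blast
    from f[OF y(2)] obtain z2 where z2: "f y2 = {y2,z2}" "adj F y2 z2" "dist z2 < dist y2" by blast
    show "y1 = y2"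
    proof (rule ccontr)
      assume ne: "y1 \<noteq> y2"
      from y(3) z1 z2 have "{y1,z1} = {y2,z2}" by simp
      with ne have "y1 = z2 \<and> y2 = z1" by (auto simp: doubleton_eq_iff)
      with z1 z2 show False by auto
    qed
  qed
  have sub: "f ` (V - {rt}) \<subseteq> F"
    using f unfolding adj_def by force
  have finF: "finite F"
  proof -
    have "F \<subseteq> Pow V" using edges by auto
    thus ?thesis using fin finite_subset by blast
  qed
  have "card (V - {rt}) \<le> card F" using card_inj_on_le[OF inj sub finF] .
  thus ?thesis using rt fin by (simp add: card_Diff_singleton)
qed

locale tr =
  fixes V :: "'v set" and E :: "'v set set" and rt :: 'v
  assumes tree: "is_tree V E" and rt: "rt \<in> V"
begin

lemma finV: "finite V" using tree unfolding is_tree_def by auto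
lemma edges: "\<forall>e\<in>E. \<exists>a\<in>V. \<exists>b\<in>V. a \<noteq> b \<and> e = {a,b}" using tree unfolding is_tree_def by auto
lemma connected: "a \<in> V \<Longrightarrow> b \<in> V \<Longrightarrow> (a,b) \<in> (adjrel E)\<^sup>*"
  using tree unfolding is_tree_def adjrel_def by auto
lemma cardE: "card E + 1 = card V" using tree unfolding is_tree_def by auto
lemma finE: "finite E"
proof -
  have "E \<subseteq> Pow V" using edges by auto
  thus ?thesis using finV finite_subset by blast
qed
lemma adj_V: "adj E a b \<Longrightarrow> a \<in> V \<and> b \<in> V"
  using edges unfolding adj_def by (force simp: doubleton_eq_iff)

lemma edge_V: assumes "{u,u'} \<in> E" shows "u \<in> V" "u' \<in> V"
proof -
  from edges assms have "\<exists>a\<in>V. \<exists>b\<in>V. a \<noteq> b \<and> {u,u'} = {a,b}" by (rule bspec)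
  then obtain a b where ab: "a \<in> V" "b \<in> V" "{u,u'} = {a,b}" by blast
  have "{u,u'} \<subseteq> V" using ab by simp
  then show "u \<in> V" "u' \<in> V" by simp_all
qed

definition conn :: "'v set \<Rightarrow> 'v \<Rightarrow> 'v \<Rightarrow> bool" where
  "conn e y z \<longleftrightarrow> (y,z) \<in> (adjrel (E - {e}))\<^sup>*"

lemma conn_refl[simp]: "conn e y y" unfolding conn_def by simp
lemma conn_sym: "conn e y z \<Longrightarrow> conn e z y" unfolding conn_def by (rule rtr_sym)
lemma conn_trans: "conn e y z \<Longrightarrow> conn e z u \<Longrightarrow> conn e y u" unfolding conn_def by simp
lemma conn_step: "adj E y z \<Longrightarrow> {y,z} \<noteq> e \<Longrightarrow> conn e y z"
  unfolding conn_def adjrel_def adj_def by (intro r_into_rtrancl) auto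

lemma bridge: assumes "{u,u'} \<in> E" shows "\<not> conn {u,u'} u u'"
proof
  assume c: "conn {u,u'} u u'"
  let ?e = "{u,u'}"
  have "adjrel E \<subseteq> (adjrel (E - {?e}))\<^sup>*"
  proof
    fix p assume "p \<in> adjrel E"
    then obtain a b where p: "p = (a,b)" "adj E a b" unfolding adjrel_def by auto
    show "p \<in> (adjrel (E - {?e}))\<^sup>*"
    proof (cases "{a,b} = ?e")
      case True
      with p(2) have "(a = u \<and> b = u') \<or> (a = u' \<and> b = u)" unfolding adj_def by (auto simp: doubleton_eq_iff)
      then show ?thesis using c conn_sym[OF c] p unfolding conn_def by auto
    next
      case False
      then show ?thesis using conn_step[OF p(2) False] p unfolding conn_def by auto
    qed
  qed
  hence sub: "(adjrel E)\<^sup>* \<subseteq> (adjrel (E - {?e}))\<^sup>*"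
    by (metis rtrancl_idemp rtrancl_mono)
  have "card V \<le> card (E - {?e}) + 1"
    by (rule conn_bound[OF finV _ rt]) (use edges connected rt sub in auto)
  moreover have "card (E - {?e}) + 1 = card E" using assms finE
    by (simp add: card_Diff_singleton) (metis card_0_eq empty_iff finE Suc_pred neq0_conv)
  ultimately show False using cardE by simp
qed

lemma cover: assumes "{u,u'} \<in> E" "y \<in> V" shows "conn {u,u'} y u \<or> conn {u,u'} y u'"
proof -
  have uV: "u \<in> V" using edge_V[OF assms(1)] by simp
  have "(u,y) \<in> (adjrel E)\<^sup>*" using connected[OF uV assms(2)] .
  thus ?thesis
  proof (induction rule: rtrancl_induct)
    case base then show ?case by simp
  next
    case (step z y)
    then have a: "adj E z y" unfolding adjrel_def by auto
    show ?case
    proof (cases "{z,y} = {u,u'}")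
      case True
      have "y \<in> {z,y}" by simp
      then have "y \<in> {u,u'}" by (simp only: True)
      then have "y = u \<or> y = u'" by simp
      then show ?thesis by (elim disjE) simp_all
    next
      case False
      have "conn {u,u'} y z" by (rule conn_sym, rule conn_step[OF a False])
      with step.IH show ?thesis by (metis conn_trans)
    qed
  qed
qed

lemma adjE_pair: "(y,z) \<in> adjrel (E - {e}) \<Longrightarrow> adj E y z \<and> {y,z} \<noteq> e"
  unfolding adjrel_def adj_def by simp

lemma adj_ne: "adj E y z \<Longrightarrow> y \<noteq> z" unfolding adj_def by simp
lemma adj_E: "adj E y z \<Longrightarrow> {y,z} \<in> E" unfolding adj_def by simp

lemma split: assumes "conn e a z" shows "conn f a z \<or> (\<exists>y\<in>f. conn e a y)"
  using assms unfolding conn_def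
proof (induction rule: rtrancl_induct)
  case base then show ?case by simp
next
  case (step z' z)
  have a: "adj E z' z" "{z',z} \<noteq> e" using adjE_pair[OF step.hyps(2)] by simp_all
  show ?case
  proof (cases "{z',z} = f")
    case True
    have "z' \<in> {z',z}" by simp
    then have zf: "z' \<in> f" by (simp only: True)
    show ?thesis using step.hyps(1) zf by blast
  next
    case False
    have s: "(z',z) \<in> (adjrel (E - {f}))\<^sup>*" using conn_step[OF a(1) False] unfolding conn_def .
    from step.IH show ?thesis
    proof
      assume "(a,z') \<in> (adjrel (E - {f}))\<^sup>*"
      then have "(a,z) \<in> (adjrel (E - {f}))\<^sup>*" using s by (rule rtrancl_trans)
      then show ?thesis by (rule disjI1)
    next
      assume "\<exists>y\<in>f. (a, y) \<in> (adjrel (E - {e}))\<^sup>*"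
      then show ?thesis by (rule disjI2)
    qed
  qed
qed

lemma dir_ex: assumes "x \<in> V" "y \<in> V" "y \<noteq> x" shows "\<exists>c. adj E x c \<and> conn {x,c} y c"
proof -
  have "(x,y) \<in> (adjrel E)\<^sup>*" using connected assms(1,2) by simp
  then have "y = x \<or> (\<exists>c. adj E x c \<and> conn {x,c} y c)"
  proof (induction rule: rtrancl_induct)
    case base then show ?case by simp
  next
    case (step z' z)
    have a: "adj E z' z" using step.hyps(2) unfolding adjrel_def by simp
    from step.IH show ?case
    proof
      assume "z' = x"
      then have "adj E x z \<and> conn {x,z} z z" using a by simp
      then show ?thesis by blast
    next
      assume "\<exists>c. adj E x c \<and> conn {x, c} z' c"
      then obtain c where c: "adj E x c" "conn {x,c} z' c" by blast
      show ?thesis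
      proof (cases "{z',z} = {x,c}")
        case False
        have "conn {x,c} z z'" by (rule conn_sym, rule conn_step[OF a False])
        then have "conn {x,c} z c" using c(2) by (rule conn_trans)
        then show ?thesis using c(1) by blast
      next
        case True
        have xc: "{x,c} \<in> E" using adj_E[OF c(1)] .
        have "z' \<noteq> z" using adj_ne[OF a] .
        have "z' \<in> {x,c}" "z \<in> {x,c}" by (simp_all only: True[symmetric]) simp_all
        then consider "z' = x" | "z' = c \<and> z = x" using \<open>z' \<noteq> z\<close> by fastforce
        then show ?thesis
        proof cases
          case 1
          then have "conn {x,c} x c" using c(2) by simp
          then show ?thesis using bridge[OF xc] by simp
        next
          case 2 then show ?thesis by simp
        qed
      qed
    qed
  qed
  with assms(3) show ?thesis by simp
qed

lemma dir_uniq: assumes a1: "adj E x c1" and a2: "adj E x c2"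
  and h1: "conn {x,c1} y c1" and h2: "conn {x,c2} y c2" shows "c1 = c2"
proof (rule ccontr)
  assume ne: "c1 \<noteq> c2"
  have e1: "{x,c1} \<in> E" and e2: "{x,c2} \<in> E" using a1 a2 by (simp_all add: adj_E)
  have x1: "x \<noteq> c1" "x \<noteq> c2" using a1 a2 by (simp_all add: adj_ne)
  have d21: "{c2,x} \<noteq> {x,c1}" using ne x1 by (simp add: doubleton_eq_iff)
  have d12: "{c1,x} \<noteq> {x,c2}" using ne x1 by (simp add: doubleton_eq_iff)
  from split[OF h2, of "{x,c1}"] show False
  proof
    assume "conn {x,c1} y c2"
    moreover have "conn {x,c1} c2 x" using conn_step[OF adj_sym[OF a2] d21] .
    ultimately have "conn {x,c1} y x" by (rule conn_trans)
    then have "conn {x,c1} x c1" using h1 by (metis conn_sym conn_trans)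
    then show False using bridge[OF e1] by simp
  next
    assume "\<exists>z\<in>{x,c1}. conn {x,c2} y z"
    then have "conn {x,c2} y x \<or> conn {x,c2} y c1" by simp
    then show False
    proof
      assume "conn {x,c2} y x"
      then have "conn {x,c2} x c2" using h2 by (metis conn_sym conn_trans)
      then show False using bridge[OF e2] by simp
    next
      assume 2: "conn {x,c2} y c1"
      have "conn {x,c2} c1 x" using conn_step[OF adj_sym[OF a1] d12] .
      then have "conn {x,c2} y x" using 2 by (metis conn_trans)
      then have "conn {x,c2} x c2" using h2 by (metis conn_sym conn_trans)
      then show False using bridge[OF e2] by simp
    qed
  qed
qed

end


context tr
begin

definition low :: "'v set \<Rightarrow> 'v set" where "low e = {y\<in>V. \<not> conn e y rt}"
definition Gf :: "('v set \<Rightarrow> real) \<Rightarrow> 'v \<Rightarrow> 'v \<Rightarrow> real" where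
  "Gf w y d = (\<Sum>e\<in>E. if y \<in> low e \<and> d \<in> low e then w e else 0)"
definition sg :: "'v \<Rightarrow> 'v \<Rightarrow> 'v \<Rightarrow> real" where
  "sg y z d = of_bool (conn {y,z} d y) - of_bool (conn {y,z} rt y)"

lemma Gf_rt: "Gf w rt d = 0" unfolding Gf_def low_def by simp
lemma Gf_sym: "Gf w y d = Gf w d y" unfolding Gf_def by (simp add: conj_commute)

lemma low_same: assumes "adj E y z" "e \<noteq> {y,z}" shows "y \<in> low e \<longleftrightarrow> z \<in> low e"
proof -
  have c: "conn e y z" using conn_step[OF assms(1)] assms(2) by metis
  have V: "y \<in> V" "z \<in> V" using adj_V[OF assms(1)] by simp_all
  have "conn e y rt \<longleftrightarrow> conn e z rt" using c by (metis conn_sym conn_trans)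
  then show ?thesis unfolding low_def using V by simp
qed

lemma Gf_diff0: assumes "adj E y z"
  shows "Gf w y d - Gf w z d = (if y \<in> low {y,z} \<and> d \<in> low {y,z} then w {y,z} else 0)
                             - (if z \<in> low {y,z} \<and> d \<in> low {y,z} then w {y,z} else 0)"
proof -
  let ?f = "\<lambda>e. (if y \<in> low e \<and> d \<in> low e then w e else 0) - (if z \<in> low e \<and> d \<in> low e then w e else 0)"
  have "Gf w y d - Gf w z d = (\<Sum>e\<in>E. ?f e)" unfolding Gf_def by (simp add: sum_subtractf)
  also have "\<dots> = ?f {y,z} + (\<Sum>e\<in>E - {{y,z}}. ?f e)" using sum.remove[OF finE adj_E[OF assms]] .
  also have "(\<Sum>e\<in>E - {{y,z}}. ?f e) = 0"
  proof (rule sum.neutral, rule ballI)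
    fix e assume "e \<in> E - {{y,z}}"
    then have "e \<noteq> {y,z}" by simp
    from low_same[OF assms this] show "?f e = 0" by simp
  qed
  finally show ?thesis by simp
qed

lemma sg_low: assumes a: "adj E y z" and dV: "d \<in> V"
  shows "of_bool (d \<in> low {y,z}) * (of_bool (y \<in> low {y,z}) - of_bool (z \<in> low {y,z})) = sg y z d"
proof -
  let ?e = "{y,z}"
  have e: "?e \<in> E" using adj_E[OF a] .
  have V: "y \<in> V" "z \<in> V" using adj_V[OF a] by simp_all
  have br: "\<not> conn ?e y z" using bridge[OF e] .
  have cr: "conn ?e rt y \<or> conn ?e rt z" using cover[OF e rt] .
  have cd: "conn ?e d y \<or> conn ?e d z" using cover[OF e dV] .
  show ?thesis
  proof (cases "conn ?e rt y")
    case True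
    have hy: "y \<notin> low ?e" unfolding low_def using True conn_sym by blast
    have hz: "z \<in> low ?e" unfolding low_def using True V br by (metis conn_sym conn_trans mem_Collect_eq)
    have hd: "d \<in> low ?e \<longleftrightarrow> \<not> conn ?e d y"
    proof -
      have "conn ?e d rt \<longleftrightarrow> conn ?e d y" using True by (metis conn_sym conn_trans)
      then show ?thesis unfolding low_def using dV by simp
    qed
    show ?thesis unfolding sg_def using True hy hz hd by simp
  next
    case False
    then have rz: "conn ?e rt z" using cr by simp
    have hy: "y \<in> low ?e" unfolding low_def using False V conn_sym by blast
    have hz: "z \<notin> low ?e" unfolding low_def using rz conn_sym by blast
    have hd: "d \<in> low ?e \<longleftrightarrow> conn ?e d y"
    proof -
      have "conn ?e d rt \<longleftrightarrow> conn ?e d z" using rz by (metis conn_sym conn_trans)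
      moreover have "conn ?e d z \<longleftrightarrow> \<not> conn ?e d y" using cd br by (metis conn_sym conn_trans)
      ultimately show ?thesis unfolding low_def using dV by simp
    qed
    show ?thesis unfolding sg_def using False hy hz hd by simp
  qed
qed

lemma Gf_diff: assumes a: "adj E y z" and dV: "d \<in> V"
  shows "Gf w y d - Gf w z d = w {y,z} * sg y z d"
proof -
  have "Gf w y d - Gf w z d = w {y,z} * (of_bool (d \<in> low {y,z}) * (of_bool (y \<in> low {y,z}) - of_bool (z \<in> low {y,z})))"
    unfolding Gf_diff0[OF a]
    by (cases "d \<in> low {y,z}"; cases "y \<in> low {y,z}"; cases "z \<in> low {y,z}") simp_all
  then show ?thesis using sg_low[OF a dV] by simp
qed

lemma sg_nb: assumes x: "x \<in> V" "x \<noteq> rt" and dV: "d \<in> V" and p: "adj E x p" "conn {x,p} rt p"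
  and c: "adj E x c"
  shows "sg x c d = of_bool (c = p) - of_bool (conn {x,c} d c)"
proof -
  let ?e = "{x,c}"
  have e: "?e \<in> E" using adj_E[OF c] .
  have br: "\<not> conn ?e x c" using bridge[OF e] .
  have cd: "conn ?e d x \<or> conn ?e d c" using cover[OF e dV] .
  have cr: "conn ?e rt x \<or> conn ?e rt c" using cover[OF e rt] .
  have 1: "of_bool (conn ?e d x) = (1::real) - of_bool (conn ?e d c)"
  proof (cases "conn ?e d x")
    case True
    then have "\<not> conn ?e d c" using br by (metis conn_sym conn_trans)
    then show ?thesis using True by simp
  next
    case False
    then show ?thesis using cd by simp
  qed
  have 2: "conn ?e rt c \<longleftrightarrow> c = p"
  proof
    assume "conn ?e rt c" then show "c = p" using dir_uniq[OF c p(1) _ p(2)] by simp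
  next
    assume "c = p" then show "conn ?e rt c" using p by simp
  qed
  have 3: "of_bool (conn ?e rt x) = (1::real) - of_bool (c = p)"
  proof (cases "conn ?e rt x")
    case True
    then have "\<not> conn ?e rt c" using br by (metis conn_sym conn_trans)
    then show ?thesis using True 2 by simp
  next
    case False
    then show ?thesis using cr 2 by simp
  qed
  show ?thesis unfolding sg_def 1 3 by simp
qed

lemma L_delta: assumes x: "x \<in> V" "x \<noteq> rt" and dV: "d \<in> V"
  shows "(\<Sum>c\<in>V. if adj E x c then sg x c d else 0) = of_bool (x = d)"
proof -
  obtain p where p: "adj E x p" "conn {x,p} rt p" using dir_ex[OF x(1) rt] x(2) by metis
  have pV: "p \<in> V" using adj_V[OF p(1)] by simp
  have "(\<Sum>c\<in>V. if adj E x c then sg x c d else 0)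
      = (\<Sum>c\<in>V. (if c = p then 1 else 0) - (if adj E x c \<and> conn {x,c} d c then 1 else 0))"
  proof (rule sum.cong[OF refl])
    fix c assume "c \<in> V"
    show "(if adj E x c then sg x c d else 0) = (if c = p then 1 else 0) - (if adj E x c \<and> conn {x,c} d c then 1 else 0)"
    proof (cases "adj E x c")
      case True
      then show ?thesis using sg_nb[OF x dV p True] by simp
    next
      case False
      then have "c \<noteq> p" using p(1) by metis
      then show ?thesis using False by simp
    qed
  qed
  also have "\<dots> = 1 - (\<Sum>c\<in>V. (if adj E x c \<and> conn {x,c} d c then 1 else 0))"
    by (simp add: sum_subtractf pV finV)
  also have "(\<Sum>c\<in>V. (if adj E x c \<and> conn {x,c} d c then 1 else 0)) = (of_bool (x \<noteq> d) :: real)"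
  proof (cases "d = x")
    case True
    have "(\<Sum>c\<in>V. (if adj E x c \<and> conn {x,c} d c then 1 else 0)) = (\<Sum>c\<in>V. (0::real))"
    proof (rule sum.cong[OF refl])
      fix c assume "c \<in> V"
      have "\<not> (adj E x c \<and> conn {x,c} x c)" using bridge adj_E by metis
      then show "(if adj E x c \<and> conn {x,c} d c then 1 else 0) = (0::real)" using True by simp
    qed
    then show ?thesis using True by simp
  next
    case False
    obtain q where q: "adj E x q" "conn {x,q} d q" using dir_ex[OF x(1) dV] False by metis
    have qV: "q \<in> V" using adj_V[OF q(1)] by simp
    have "(\<Sum>c\<in>V. (if adj E x c \<and> conn {x,c} d c then 1 else 0)) = (\<Sum>c\<in>V. (if c = q then 1 else (0::real)))"
    proof (rule sum.cong[OF refl])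
      fix c assume "c \<in> V"
      have "adj E x c \<and> conn {x,c} d c \<longleftrightarrow> c = q"
        using dir_uniq[OF _ q(1) _ q(2)] q by metis
      then show "(if adj E x c \<and> conn {x,c} d c then 1 else 0) = (if c = q then 1 else (0::real))" by simp
    qed
    then show ?thesis using False qV finV by simp
  qed
  finally show ?thesis by simp
qed

end


lemma lap_sym: "laplacian_w V E w a b = laplacian_w V E w b a"
proof (cases "a = b")
  case True then show ?thesis by simp
next
  case False
  have 1: "adj E a b \<longleftrightarrow> adj E b a" using adj_sym by metis
  have 2: "{a,b} = {b,a}" by (rule insert_commute)
  show ?thesis unfolding laplacian_w_def using False 1 2 by simp
qed

context tr
begin

definition G0 :: "('v set \<Rightarrow> real) \<Rightarrow> 'v \<Rightarrow> 'v \<Rightarrow> real" where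
  "G0 w a b = (if a \<in> V - {rt} \<and> b \<in> V - {rt} then Gf w a b else 0)"

lemma G0_sym: "G0 w a b = G0 w b a" unfolding G0_def using Gf_sym by metis

lemma H_G: assumes wpos: "\<forall>e\<in>E. w e > 0" and x: "x \<in> V - {rt}" and d: "d \<in> V - {rt}"
  shows "(\<Sum>c\<in>V - {rt}. laplacian_w V E w x c * G0 w c d) = of_bool (x = d)"
proof -
  let ?H = "laplacian_w V E w"
  have xV: "x \<in> V" "x \<noteq> rt" and dV: "d \<in> V" and dr: "d \<noteq> rt" using x d by simp_all
  have "(\<Sum>c\<in>V - {rt}. ?H x c * G0 w c d) = (\<Sum>c\<in>V - {rt}. ?H x c * Gf w c d)"
    by (rule sum.cong[OF refl]) (simp add: G0_def dV dr)
  also have "\<dots> = (\<Sum>c\<in>V. ?H x c * Gf w c d)"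
    using sum.remove[OF finV rt, of "\<lambda>c. ?H x c * Gf w c d"] by (simp add: Gf_rt)
  also have "\<dots> = (\<Sum>c\<in>V. (if c = x then ?H x x * Gf w x d else 0) - (if adj E x c then Gf w c d / w {x,c} else 0))"
  proof (rule sum.cong[OF refl])
    fix c assume "c \<in> V"
    show "?H x c * Gf w c d = (if c = x then ?H x x * Gf w x d else 0) - (if adj E x c then Gf w c d / w {x,c} else 0)"
    proof (cases "c = x")
      case True
      then have "\<not> adj E x c" using adj_ne by metis
      then show ?thesis using True by simp
    next
      case False
      then show ?thesis unfolding laplacian_w_def by simp
    qed
  qed
  also have "\<dots> = ?H x x * Gf w x d - (\<Sum>c\<in>V. if adj E x c then Gf w c d / w {x,c} else 0)"
    by (simp add: sum_subtractf finV xV)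
  also have "?H x x * Gf w x d = (\<Sum>c\<in>V. if adj E x c then Gf w x d / w {x,c} else 0)"
  proof -
    have "?H x x * Gf w x d = (\<Sum>c\<in>V. (if adj E x c then 1 / w {x,c} else 0) * Gf w x d)"
      unfolding laplacian_w_def by (simp add: sum_distrib_right)
    also have "\<dots> = (\<Sum>c\<in>V. if adj E x c then Gf w x d / w {x,c} else 0)"
      by (rule sum.cong[OF refl]) simp
    finally show ?thesis .
  qed
  also have "(\<Sum>c\<in>V. if adj E x c then Gf w x d / w {x,c} else 0) - (\<Sum>c\<in>V. if adj E x c then Gf w c d / w {x,c} else 0)
      = (\<Sum>c\<in>V. if adj E x c then sg x c d else 0)"
    unfolding sum_subtractf[symmetric]
  proof (rule sum.cong[OF refl])
    fix c assume "c \<in> V"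
    show "(if adj E x c then Gf w x d / w {x,c} else 0) - (if adj E x c then Gf w c d / w {x,c} else 0)
        = (if adj E x c then sg x c d else 0)"
    proof (cases "adj E x c")
      case True
      have wp: "w {x,c} > 0" using wpos adj_E[OF True] by simp
      have "Gf w x d / w {x,c} - Gf w c d / w {x,c} = (Gf w x d - Gf w c d) / w {x,c}"
        by (simp add: diff_divide_distrib)
      also have "\<dots> = sg x c d" unfolding Gf_diff[OF True dV] using wp by simp
      finally show ?thesis using True by simp
    qed simp
  qed
  also have "\<dots> = of_bool (x = d)" using L_delta[OF xV dV] .
  finally show ?thesis .
qed

lemma Hinv_eq: assumes wpos: "\<forall>e\<in>E. w e > 0" shows "Hinv V E rt w = G0 w"
proof -
  let ?N = "V - {rt}"
  let ?H = "laplacian_w V E w"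
  let ?P = "\<lambda>G. (\<forall>a\<in>?N. \<forall>b\<in>?N. (\<Sum>c\<in>?N. ?H a c * G c b) = (if a = b then 1 else 0))
                          \<and> (\<forall>a b. a \<notin> ?N \<or> b \<notin> ?N \<longrightarrow> G a b = 0)"
  have finN: "finite ?N" using finV by simp
  have P0: "?P (G0 w)"
  proof
    show "\<forall>a\<in>?N. \<forall>b\<in>?N. (\<Sum>c\<in>?N. ?H a c * G0 w c b) = (if a = b then 1 else 0)"
      using H_G[OF wpos] by simp
    show "\<forall>a b. a \<notin> ?N \<or> b \<notin> ?N \<longrightarrow> G0 w a b = 0" unfolding G0_def by simp
  qed
  have left: "(\<Sum>c'\<in>?N. G0 w a c' * ?H c' c) = of_bool (a = c)" if "a \<in> ?N" "c \<in> ?N" for a c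
  proof -
    have "(\<Sum>c'\<in>?N. G0 w a c' * ?H c' c) = (\<Sum>c'\<in>?N. ?H c c' * G0 w c' a)"
      by (rule sum.cong[OF refl]) (subst G0_sym, subst lap_sym, rule mult.commute)
    also have "\<dots> = of_bool (c = a)" using H_G[OF wpos that(2) that(1)] .
    finally show ?thesis by auto
  qed
  have uniq: "G = G0 w" if PG: "?P G" for G
  proof (rule ext, rule ext)
    fix a b
    show "G a b = G0 w a b"
    proof (cases "a \<in> ?N \<and> b \<in> ?N")
      case False
      then have "G a b = 0" "G0 w a b = 0" using PG P0 by simp_all
      then show ?thesis by simp
    next
      case True
      then have aN: "a \<in> ?N" and bN: "b \<in> ?N" by simp_all
      have "(\<Sum>c\<in>?N. of_bool (a = c) * G c b) = (\<Sum>c\<in>?N. if a = c then G c b else 0)"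
        by (rule sum.cong[OF refl]) simp
      also have "\<dots> = G a b" using aN finN by (simp add: sum.delta)
      finally have "G a b = (\<Sum>c\<in>?N. of_bool (a = c) * G c b)" by simp
      also have "\<dots> = (\<Sum>c\<in>?N. (\<Sum>c'\<in>?N. G0 w a c' * ?H c' c) * G c b)"
      proof (rule sum.cong[OF refl])
        fix c assume "c \<in> ?N"
        then show "of_bool (a = c) * G c b = (\<Sum>c'\<in>?N. G0 w a c' * ?H c' c) * G c b"
          using left[OF aN] by simp
      qed
      also have "\<dots> = (\<Sum>c'\<in>?N. G0 w a c' * (\<Sum>c\<in>?N. ?H c' c * G c b))"
      proof -
        have "(\<Sum>c\<in>?N. (\<Sum>c'\<in>?N. G0 w a c' * ?H c' c) * G c b) = (\<Sum>c\<in>?N. \<Sum>c'\<in>?N. G0 w a c' * ?H c' c * G c b)"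
          by (simp only: sum_distrib_right)
        also have "\<dots> = (\<Sum>c'\<in>?N. \<Sum>c\<in>?N. G0 w a c' * ?H c' c * G c b)"
          by (rule sum.swap)
        also have "\<dots> = (\<Sum>c'\<in>?N. G0 w a c' * (\<Sum>c\<in>?N. ?H c' c * G c b))"
          by (simp only: sum_distrib_left mult.assoc)
        finally show ?thesis .
      qed
      also have "\<dots> = (\<Sum>c'\<in>?N. G0 w a c' * (if c' = b then 1 else 0))"
      proof (rule sum.cong[OF refl])
        fix c' assume "c' \<in> ?N"
        then show "G0 w a c' * (\<Sum>c\<in>?N. ?H c' c * G c b) = G0 w a c' * (if c' = b then 1 else 0)"
          using PG bN by simp
      qed
      also have "\<dots> = (\<Sum>c'\<in>?N. if c' = b then G0 w a c' else 0)"
        by (rule sum.cong[OF refl]) simp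
      also have "\<dots> = G0 w a b" using bN finN by (simp add: sum.delta)
      finally show ?thesis .
    qed
  qed
  have "mat_inv_on ?N ?H = G0 w" unfolding mat_inv_on_def
    by (rule the_equality[of ?P, OF P0 uniq])
  then show ?thesis unfolding Hinv_def .
qed

end


definition Tq :: "real \<Rightarrow> real \<Rightarrow> real \<Rightarrow> real \<Rightarrow> real \<Rightarrow> real" where
  "Tq sp sq spq a b = a\<^sup>2 * sp + b\<^sup>2 * sq + 2 * a * b * spq"

lemma Tq_neg: "Tq sp sq spq (-a) (-b) = Tq sp sq spq a b" unfolding Tq_def by simp

lemma Tq_mono: assumes "0 \<le> A0" "A0 \<le> A" "0 \<le> B0" "B0 \<le> B" "0 \<le> sp" "0 \<le> sq" "0 \<le> spq"
  shows "Tq sp sq spq A0 B0 \<le> Tq sp sq spq A B"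
proof -
  have 1: "A0\<^sup>2 \<le> A\<^sup>2" using assms(1,2) by (simp add: power_mono)
  have 2: "B0\<^sup>2 \<le> B\<^sup>2" using assms(3,4) by (simp add: power_mono)
  have 3: "A0 * B0 \<le> A * B" using assms(1-4) by (simp add: mult_mono)
  have "A0\<^sup>2 * sp \<le> A\<^sup>2 * sp" using 1 assms(5) by (rule mult_right_mono)
  moreover have "B0\<^sup>2 * sq \<le> B\<^sup>2 * sq" using 2 assms(6) by (rule mult_right_mono)
  moreover have "(A0 * B0) * spq \<le> (A * B) * spq" using 3 assms(7) by (rule mult_right_mono)
  ultimately show ?thesis unfolding Tq_def by (simp add: mult.assoc)
qed

lemma Tq_margin: assumes "0 \<le> A0" "A0 + \<rho> \<le> A" "0 \<le> B0" "B0 + \<xi> \<le> B" "0 < \<rho>" "0 < \<xi>"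
   "0 \<le> sp" "0 \<le> sq" "0 \<le> spq"
  shows "Tq sp sq spq A0 B0 + min (\<rho>\<^sup>2) (\<xi>\<^sup>2) * (sp + sq + 2 * spq) \<le> Tq sp sq spq A B"
proof -
  let ?m = "min (\<rho>\<^sup>2) (\<xi>\<^sup>2)"
  have "(A0 + \<rho>)\<^sup>2 \<le> A\<^sup>2" using assms by (intro power_mono) auto
  then have 1: "A0\<^sup>2 + ?m \<le> A\<^sup>2" using assms(1,5) by (simp add: power2_eq_square algebra_simps) (smt (verit) min.cobounded1 mult_nonneg_nonneg)
  have "(B0 + \<xi>)\<^sup>2 \<le> B\<^sup>2" using assms by (intro power_mono) auto
  then have 2: "B0\<^sup>2 + ?m \<le> B\<^sup>2" using assms(3,6) by (simp add: power2_eq_square algebra_simps) (smt (verit) min.cobounded2 mult_nonneg_nonneg)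
  have "(A0 + \<rho>) * (B0 + \<xi>) \<le> A * B" using assms by (intro mult_mono) auto
  moreover have "?m \<le> \<rho> * \<xi>"
  proof (cases "\<rho> \<le> \<xi>")
    case True
    then have "\<rho> * \<rho> \<le> \<rho> * \<xi>" using assms(5) by (simp add: mult_left_mono)
    then show ?thesis by (simp add: power2_eq_square min_def)
  next
    case False
    then have "\<xi> * \<xi> \<le> \<rho> * \<xi>" using assms(6) by (simp add: mult_right_mono)
    then show ?thesis by (simp add: power2_eq_square min_def)
  qed
  moreover have "0 \<le> A0 * \<xi> + \<rho> * B0" using assms by simp
  ultimately have 3: "A0 * B0 + ?m \<le> A * B" by (simp add: algebra_simps)
  have "(A0\<^sup>2 + ?m) * sp \<le> A\<^sup>2 * sp" using 1 assms(7) by (rule mult_right_mono)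
  moreover have "(B0\<^sup>2 + ?m) * sq \<le> B\<^sup>2 * sq" using 2 assms(8) by (rule mult_right_mono)
  moreover have "(A0 * B0 + ?m) * spq \<le> (A * B) * spq" using 3 assms(9) by (rule mult_right_mono)
  ultimately show ?thesis unfolding Tq_def by (simp add: algebra_simps)
qed

lemma sum_ge2: assumes "2 \<le> (k::nat)" "\<forall>i<k. 0 \<le> f i" shows "f 0 + f 1 \<le> (\<Sum>i<k. (f i :: real))"
proof -
  have "sum f {0,1} \<le> sum f {..<k}" by (rule sum_mono2) (use assms in auto)
  then show ?thesis by simp
qed

lemma per_d_nonneg:
  fixes s rr xx :: "nat \<Rightarrow> real"
  assumes k: "2 \<le> k" and s: "\<forall>i<k. s i = 0 \<or> s i = 1"
    and pos: "\<forall>i<k. rr i > 0 \<and> xx i > 0" and sig: "0 \<le> sp" "0 \<le> sq" "0 \<le> spq"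
  shows "Tq sp sq spq (rr 0 * s 0) (xx 0 * s 0) \<le> Tq sp sq spq (\<Sum>i<k. rr i * s i) (\<Sum>i<k. xx i * s i)"
    and "s 1 \<noteq> 0 \<Longrightarrow> \<rho> \<le> rr 1 \<Longrightarrow> \<xi> \<le> xx 1 \<Longrightarrow> 0 < \<rho> \<Longrightarrow> 0 < \<xi> \<Longrightarrow>
         Tq sp sq spq (rr 0 * s 0) (xx 0 * s 0) + min (\<rho>\<^sup>2) (\<xi>\<^sup>2) * (sp + sq + 2 * spq)
          \<le> Tq sp sq spq (\<Sum>i<k. rr i * s i) (\<Sum>i<k. xx i * s i)"
proof -
  have nr: "\<forall>i<k. 0 \<le> rr i * s i" using s pos by (metis less_le mult_nonneg_nonneg order_refl zero_le_one)
  have nx: "\<forall>i<k. 0 \<le> xx i * s i" using s pos by (metis less_le mult_nonneg_nonneg order_refl zero_le_one)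
  have gr: "rr 0 * s 0 + rr 1 * s 1 \<le> (\<Sum>i<k. rr i * s i)" using sum_ge2[OF k nr] .
  have gx: "xx 0 * s 0 + xx 1 * s 1 \<le> (\<Sum>i<k. xx i * s i)" using sum_ge2[OF k nx] .
  have k1: "0 < k" "1 < k" using k by auto
  have r0: "0 \<le> rr 0 * s 0" "0 \<le> rr 1 * s 1" using nr k1 by auto
  have x0: "0 \<le> xx 0 * s 0" "0 \<le> xx 1 * s 1" using nx k1 by auto
  show "Tq sp sq spq (rr 0 * s 0) (xx 0 * s 0) \<le> Tq sp sq spq (\<Sum>i<k. rr i * s i) (\<Sum>i<k. xx i * s i)"
    by (rule Tq_mono) (use gr gx r0 x0 sig in linarith)+
  assume s1: "s 1 \<noteq> 0" and rho: "\<rho> \<le> rr 1" "\<xi> \<le> xx 1" "0 < \<rho>" "0 < \<xi>"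
  have "s 1 = 1" using s1 s k1 by auto
  then have "rr 0 * s 0 + \<rho> \<le> (\<Sum>i<k. rr i * s i)" "xx 0 * s 0 + \<xi> \<le> (\<Sum>i<k. xx i * s i)"
    using gr gx rho by auto
  then show "Tq sp sq spq (rr 0 * s 0) (xx 0 * s 0) + min (\<rho>\<^sup>2) (\<xi>\<^sup>2) * (sp + sq + 2 * spq)
          \<le> Tq sp sq spq (\<Sum>i<k. rr i * s i) (\<Sum>i<k. xx i * s i)"
    by (intro Tq_margin) (use r0 x0 rho sig in auto)
qed

lemma per_d:
  fixes s rr xx :: "nat \<Rightarrow> real"
  assumes k: "2 \<le> k" and s: "\<forall>i<k. s i = 0 \<or> s i = 1 \<or> s i = -1"
    and sgn: "(\<forall>i<k. 0 \<le> s i) \<or> (\<forall>i<k. s i \<le> 0)"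
    and pos: "\<forall>i<k. rr i > 0 \<and> xx i > 0" and sig: "0 \<le> sp" "0 \<le> sq" "0 \<le> spq"
  shows "Tq sp sq spq (rr 0 * s 0) (xx 0 * s 0) \<le> Tq sp sq spq (\<Sum>i<k. rr i * s i) (\<Sum>i<k. xx i * s i)"
    and "s 1 \<noteq> 0 \<Longrightarrow> \<rho> \<le> rr 1 \<Longrightarrow> \<xi> \<le> xx 1 \<Longrightarrow> 0 < \<rho> \<Longrightarrow> 0 < \<xi> \<Longrightarrow>
         Tq sp sq spq (rr 0 * s 0) (xx 0 * s 0) + min (\<rho>\<^sup>2) (\<xi>\<^sup>2) * (sp + sq + 2 * spq)
          \<le> Tq sp sq spq (\<Sum>i<k. rr i * s i) (\<Sum>i<k. xx i * s i)"
proof -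
  have main: "Tq sp sq spq (rr 0 * s 0) (xx 0 * s 0) \<le> Tq sp sq spq (\<Sum>i<k. rr i * s i) (\<Sum>i<k. xx i * s i)
    \<and> (s 1 \<noteq> 0 \<longrightarrow> \<rho> \<le> rr 1 \<longrightarrow> \<xi> \<le> xx 1 \<longrightarrow> 0 < \<rho> \<longrightarrow> 0 < \<xi> \<longrightarrow>
         Tq sp sq spq (rr 0 * s 0) (xx 0 * s 0) + min (\<rho>\<^sup>2) (\<xi>\<^sup>2) * (sp + sq + 2 * spq)
          \<le> Tq sp sq spq (\<Sum>i<k. rr i * s i) (\<Sum>i<k. xx i * s i))"
  proof (cases "\<forall>i<k. 0 \<le> s i")
    case True
    then have s01: "\<forall>i<k. s i = 0 \<or> s i = 1" using s by force
    show ?thesis using per_d_nonneg[OF k s01 pos sig] by blast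
  next
    case False
    then have neg: "\<forall>i<k. s i \<le> 0" using sgn by blast
    let ?t = "\<lambda>i. - s i"
    have t01: "\<forall>i<k. ?t i = 0 \<or> ?t i = 1" using s neg by force
    have eA: "(\<Sum>i<k. rr i * s i) = - (\<Sum>i<k. rr i * ?t i)" by (simp add: sum_negf)
    have eB: "(\<Sum>i<k. xx i * s i) = - (\<Sum>i<k. xx i * ?t i)" by (simp add: sum_negf)
    have e0: "rr 0 * s 0 = - (rr 0 * ?t 0)" "xx 0 * s 0 = - (xx 0 * ?t 0)" by simp_all
    have t1: "s 1 \<noteq> 0 \<longleftrightarrow> ?t 1 \<noteq> 0" by simp
    show ?thesis unfolding eA eB e0 Tq_neg t1 using per_d_nonneg[OF k t01 pos sig] by blast
  qed
  then show "Tq sp sq spq (rr 0 * s 0) (xx 0 * s 0) \<le> Tq sp sq spq (\<Sum>i<k. rr i * s i) (\<Sum>i<k. xx i * s i)"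
    by blast
  show "s 1 \<noteq> 0 \<Longrightarrow> \<rho> \<le> rr 1 \<Longrightarrow> \<xi> \<le> xx 1 \<Longrightarrow> 0 < \<rho> \<Longrightarrow> 0 < \<xi> \<Longrightarrow>
         Tq sp sq spq (rr 0 * s 0) (xx 0 * s 0) + min (\<rho>\<^sup>2) (\<xi>\<^sup>2) * (sp + sq + 2 * spq)
          \<le> Tq sp sq spq (\<Sum>i<k. rr i * s i) (\<Sum>i<k. xx i * s i)" using main by blast
qed



context tr
begin

lemma sp_adj: "simple_path E ps \<Longrightarrow> Suc i < length ps \<Longrightarrow> adj E (ps!i) (ps!Suc i)"
  unfolding simple_path_def by blast

lemma sp_edge_ne: assumes sp: "simple_path E ps" and i: "Suc (Suc i) < length ps"
  shows "{ps!i, ps!Suc i} \<noteq> {ps!Suc i, ps!Suc (Suc i)}"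
proof
  assume eq: "{ps!i, ps!Suc i} = {ps!Suc i, ps!Suc (Suc i)}"
  have d: "distinct ps" using sp unfolding simple_path_def by simp
  have ne: "ps!i \<noteq> ps!Suc i" using adj_ne[OF sp_adj[OF sp]] i by simp
  have "ps!i \<in> {ps!i, ps!Suc i}" by simp
  then have "ps!i \<in> {ps!Suc i, ps!Suc (Suc i)}" by (simp only: eq)
  then have "ps!i = ps!Suc (Suc i)" using ne by simp
  then have "i = Suc (Suc i)" using nth_eq_iff_index_eq[OF d] i by simp
  then show False by simp
qed

lemma chain_step: assumes sp: "simple_path E ps" and i: "Suc (Suc i) < length ps"
  and h: "conn {ps!i, ps!Suc i} y (ps!i)"
  shows "conn {ps!Suc i, ps!Suc(Suc i)} y (ps!Suc i)"
proof -
  define a where "a = ps!i"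
  define b where "b = ps!Suc i"
  define c where "c = ps!Suc (Suc i)"
  have a1: "adj E a b" unfolding a_def b_def using sp_adj[OF sp] i by simp
  have a2: "adj E b c" unfolding c_def b_def using sp_adj[OF sp] i by simp
  have ne: "{a,b} \<noteq> {b,c}" unfolding a_def b_def c_def using sp_edge_ne[OF sp i] .
  have ne': "{c,b} \<noteq> {a,b}" using ne by (metis insert_commute)
  have e1: "{a,b} \<in> E" using adj_E[OF a1] .
  have h': "conn {a,b} y a" using h unfolding a_def b_def .
  have "conn {b,c} y b"
  using split[OF h', of "{b,c}"]
  proof
    assume "conn {b,c} y a"
    moreover have "conn {b,c} a b" using conn_step[OF a1 ne] .
    ultimately show ?thesis by (rule conn_trans)
  next
    assume "\<exists>z\<in>{b,c}. conn {a,b} y z"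
    then have "conn {a,b} y b \<or> conn {a,b} y c" by simp
    then show ?thesis
    proof
      assume "conn {a,b} y b"
      then have "conn {a,b} a b" using h' by (metis conn_sym conn_trans)
      with bridge[OF e1] show ?thesis by simp
    next
      assume c: "conn {a,b} y c"
      have "conn {a,b} c b" using conn_step[OF adj_sym[OF a2] ne'] .
      then have "conn {a,b} a b" using h' c by (metis conn_sym conn_trans)
      with bridge[OF e1] show ?thesis by simp
    qed
  qed
  then show ?thesis unfolding b_def c_def .
qed

lemma chain: assumes sp: "simple_path E ps" and ij: "i \<le> j" and j: "Suc j < length ps"
  and h: "conn {ps!i, ps!Suc i} y (ps!i)"
  shows "conn {ps!j, ps!Suc j} y (ps!j)"
  using ij j
proof (induction j)
  case 0 then show ?case using h by simp
next
  case (Suc j)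
  show ?case
  proof (cases "i = Suc j")
    case True then show ?thesis using h by simp
  next
    case False
    then have "i \<le> j" using Suc.prems by simp
    then have "conn {ps!j, ps!Suc j} y (ps!j)" using Suc.IH Suc.prems by simp
    then show ?thesis using chain_step[OF sp] Suc.prems by simp
  qed
qed

lemma sg_vals: "sg y z d = 0 \<or> sg y z d = 1 \<or> sg y z d = -1"
  unfolding sg_def by (cases "conn {y,z} d y"; cases "conn {y,z} rt y") simp_all

lemma sg_sign: assumes sp: "simple_path E ps"
  shows "(\<forall>i<length ps - 1. 0 \<le> sg (ps!i) (ps!Suc i) d) \<or> (\<forall>i<length ps - 1. sg (ps!i) (ps!Suc i) d \<le> 0)"
proof (rule ccontr)
  assume "\<not> ?thesis"
  then obtain i j where i: "i < length ps - 1" "sg (ps!i) (ps!Suc i) d < 0"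
    and j: "j < length ps - 1" "sg (ps!j) (ps!Suc j) d > 0" by (meson not_le)
  from i(2) have ci: "\<not> conn {ps!i, ps!Suc i} d (ps!i)" "conn {ps!i, ps!Suc i} rt (ps!i)"
    unfolding sg_def by (cases "conn {ps!i, ps!Suc i} d (ps!i)"; cases "conn {ps!i, ps!Suc i} rt (ps!i)"; simp)+
  from j(2) have cj: "conn {ps!j, ps!Suc j} d (ps!j)" "\<not> conn {ps!j, ps!Suc j} rt (ps!j)"
    unfolding sg_def by (cases "conn {ps!j, ps!Suc j} d (ps!j)"; cases "conn {ps!j, ps!Suc j} rt (ps!j)"; simp)+
  show False
  proof (cases "i \<le> j")
    case True
    have "conn {ps!j, ps!Suc j} rt (ps!j)" using chain[OF sp True _ ci(2)] j(1) by simp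
    with cj(2) show False by simp
  next
    case False
    then have ji: "j \<le> i" by simp
    have "conn {ps!i, ps!Suc i} d (ps!i)" using chain[OF sp ji _ cj(1)] i(1) by simp
    with ci(1) show False by simp
  qed
qed

lemma path_pot: assumes sp: "simple_path E ps" and dV: "d \<in> V"
  shows "Gf w (ps!0) d - Gf w (ps!(length ps - 1)) d
       = (\<Sum>i<length ps - 1. w {ps!i, ps!Suc i} * sg (ps!i) (ps!Suc i) d)"
proof -
  have "Gf w (ps!0) d - Gf w (ps!(length ps - 1)) d = (\<Sum>i<length ps - 1. Gf w (ps!i) d - Gf w (ps!Suc i) d)"
    by (rule sum_lessThan_telescope'[symmetric])
  also have "\<dots> = (\<Sum>i<length ps - 1. w {ps!i, ps!Suc i} * sg (ps!i) (ps!Suc i) d)"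
  proof (rule sum.cong[OF refl])
    fix i assume "i \<in> {..<length ps - 1}"
    then have "Suc i < length ps" by simp
    then show "Gf w (ps!i) d - Gf w (ps!Suc i) d = w {ps!i, ps!Suc i} * sg (ps!i) (ps!Suc i) d"
      using Gf_diff[OF sp_adj[OF sp] dV] by simp
  qed
  finally show ?thesis .
qed

end


definition L2 :: "'w measure \<Rightarrow> ('w \<Rightarrow> real) set" where
  "L2 M = {f. f \<in> borel_measurable M \<and> integrable M (\<lambda>\<omega>. (f \<omega>)\<^sup>2)}"

lemma cov_comm: "cov M X Y = cov M Y X" unfolding cov_def by (simp add: mult.commute)

lemma abs_prod_le: "\<bar>a * b\<bar> \<le> (a::real)\<^sup>2 + b\<^sup>2"
proof -
  have "0 \<le> (\<bar>a\<bar> - \<bar>b\<bar>)\<^sup>2" by simp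
  then have "2 * (\<bar>a\<bar> * \<bar>b\<bar>) \<le> \<bar>a\<bar>\<^sup>2 + \<bar>b\<bar>\<^sup>2" by (simp add: power2_eq_square algebra_simps)
  moreover have "0 \<le> \<bar>a\<bar> * \<bar>b\<bar>" by simp
  ultimately have "\<bar>a\<bar> * \<bar>b\<bar> \<le> \<bar>a\<bar>\<^sup>2 + \<bar>b\<bar>\<^sup>2" by linarith
  then show ?thesis by (simp add: abs_mult)
qed

lemma L2_prod_int: assumes "f \<in> L2 M" "g \<in> L2 M" shows "integrable M (\<lambda>\<omega>. f \<omega> * g \<omega>)"
proof (rule Bochner_Integration.integrable_bound)
  show "integrable M (\<lambda>\<omega>. (f \<omega>)\<^sup>2 + (g \<omega>)\<^sup>2)" using assms unfolding L2_def by simp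
  show "(\<lambda>\<omega>. f \<omega> * g \<omega>) \<in> borel_measurable M" using assms unfolding L2_def by (intro borel_measurable_times) auto
  show "AE \<omega> in M. norm (f \<omega> * g \<omega>) \<le> norm ((f \<omega>)\<^sup>2 + (g \<omega>)\<^sup>2)"
  proof (rule AE_I2)
    fix \<omega>
    have "0 \<le> (f \<omega>)\<^sup>2 + (g \<omega>)\<^sup>2" by simp
    then show "norm (f \<omega> * g \<omega>) \<le> norm ((f \<omega>)\<^sup>2 + (g \<omega>)\<^sup>2)"
      using abs_prod_le[of "f \<omega>" "g \<omega>"] by simp
  qed
qed

lemma L2_const: assumes "prob_space M" shows "(\<lambda>\<omega>. c) \<in> L2 M"
proof -
  interpret prob_space M by (rule assms)
  show ?thesis unfolding L2_def by simp
qed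

lemma L2_int: assumes "prob_space M" "f \<in> L2 M" shows "integrable M f"
  using L2_prod_int[OF assms(2) L2_const[OF assms(1), of 1]] by simp

lemma L2_lin: assumes "f \<in> L2 M" "g \<in> L2 M" shows "(\<lambda>\<omega>. a * f \<omega> + b * g \<omega>) \<in> L2 M"
proof -
  have eq: "(\<lambda>\<omega>. (a * f \<omega> + b * g \<omega>)\<^sup>2) = (\<lambda>\<omega>. a\<^sup>2 * (f \<omega>)\<^sup>2 + 2 * a * b * (f \<omega> * g \<omega>) + b\<^sup>2 * (g \<omega>)\<^sup>2)"
    by (rule ext) (simp add: power2_eq_square algebra_simps)
  have i1: "integrable M (\<lambda>\<omega>. (f \<omega>)\<^sup>2)" "integrable M (\<lambda>\<omega>. (g \<omega>)\<^sup>2)" using assms unfolding L2_def by simp_all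
  have i2: "integrable M (\<lambda>\<omega>. f \<omega> * g \<omega>)" using L2_prod_int[OF assms] .
  have "integrable M (\<lambda>\<omega>. (a * f \<omega> + b * g \<omega>)\<^sup>2)" unfolding eq using i1 i2 by simp
  moreover have "(\<lambda>\<omega>. a * f \<omega> + b * g \<omega>) \<in> borel_measurable M" using assms unfolding L2_def by (intro borel_measurable_add borel_measurable_times) auto
  ultimately show ?thesis unfolding L2_def by simp
qed

lemma L2_center: assumes "prob_space M" "f \<in> L2 M" shows "(\<lambda>\<omega>. f \<omega> - c) \<in> L2 M"
  using L2_lin[OF assms(2) L2_const[OF assms(1)], of 1 "-1" c] by simp

lemma L2_sum: assumes P: "prob_space M" and fin: "finite I" and f: "\<forall>i\<in>I. f i \<in> L2 M"
  shows "(\<lambda>\<omega>. \<Sum>i\<in>I. f i \<omega>) \<in> L2 M"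
  using fin f
proof (induction I rule: finite_induct)
  case empty then show ?case using L2_const[OF P, of 0] by simp
next
  case (insert i I)
  then have "(\<lambda>\<omega>. 1 * f i \<omega> + 1 * (\<Sum>i\<in>I. f i \<omega>)) \<in> L2 M" by (intro L2_lin) simp_all
  then show ?case using insert by simp
qed

lemma var_expand:
  assumes P: "prob_space M" and fin: "finite N"
    and X: "\<forall>d\<in>N. X d \<in> L2 M" and Y: "\<forall>d\<in>N. Y d \<in> L2 M"
    and cXX: "\<forall>d\<in>N. \<forall>d'\<in>N. d \<noteq> d' \<longrightarrow> cov M (X d) (X d') = 0"
    and cYY: "\<forall>d\<in>N. \<forall>d'\<in>N. d \<noteq> d' \<longrightarrow> cov M (Y d) (Y d') = 0"
    and cYX: "\<forall>d\<in>N. \<forall>d'\<in>N. d \<noteq> d' \<longrightarrow> cov M (Y d) (X d') = 0"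
  shows "integral\<^sup>L M (\<lambda>\<omega>. (\<Sum>d\<in>N. \<alpha> d * (X d \<omega> - integral\<^sup>L M (X d)) + \<beta> d * (Y d \<omega> - integral\<^sup>L M (Y d)))\<^sup>2)
       = (\<Sum>d\<in>N. Tq (cov M (X d) (X d)) (cov M (Y d) (Y d)) (cov M (X d) (Y d)) (\<alpha> d) (\<beta> d))"
proof -
  define Xc where "Xc d = (\<lambda>\<omega>. X d \<omega> - integral\<^sup>L M (X d))" for d
  define Yc where "Yc d = (\<lambda>\<omega>. Y d \<omega> - integral\<^sup>L M (Y d))" for d
  define U where "U d = (\<lambda>\<omega>. \<alpha> d * Xc d \<omega> + \<beta> d * Yc d \<omega>)" for d
  have Xc: "Xc d \<in> L2 M" if "d \<in> N" for d unfolding Xc_def using L2_center[OF P] X that by simp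
  have Yc: "Yc d \<in> L2 M" if "d \<in> N" for d unfolding Yc_def using L2_center[OF P] Y that by simp
  have U: "U d \<in> L2 M" if "d \<in> N" for d unfolding U_def using L2_lin[OF Xc[OF that] Yc[OF that]] .
  have cX: "cov M (X d) (X d') = integral\<^sup>L M (\<lambda>\<omega>. Xc d \<omega> * Xc d' \<omega>)" for d d'
    unfolding cov_def Xc_def ..
  have cY: "cov M (Y d) (Y d') = integral\<^sup>L M (\<lambda>\<omega>. Yc d \<omega> * Yc d' \<omega>)" for d d'
    unfolding cov_def Yc_def ..
  have cXY: "cov M (X d) (Y d') = integral\<^sup>L M (\<lambda>\<omega>. Xc d \<omega> * Yc d' \<omega>)" for d d'
    unfolding cov_def Xc_def Yc_def ..
  have cYX': "cov M (Y d) (X d') = integral\<^sup>L M (\<lambda>\<omega>. Yc d \<omega> * Xc d' \<omega>)" for d d'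
    unfolding cov_def Xc_def Yc_def ..
  have int: "integrable M (\<lambda>\<omega>. U d \<omega> * U d' \<omega>)" if "d \<in> N" "d' \<in> N" for d d'
    using L2_prod_int[OF U[OF that(1)] U[OF that(2)]] .
  have EU: "integral\<^sup>L M (\<lambda>\<omega>. U d \<omega> * U d' \<omega>)
      = \<alpha> d * \<alpha> d' * cov M (X d) (X d') + \<alpha> d * \<beta> d' * cov M (X d) (Y d')
        + \<beta> d * \<alpha> d' * cov M (Y d) (X d') + \<beta> d * \<beta> d' * cov M (Y d) (Y d')"
    if d: "d \<in> N" "d' \<in> N" for d d'
  proof -
    have eq: "(\<lambda>\<omega>. U d \<omega> * U d' \<omega>) = (\<lambda>\<omega>. (\<alpha> d * \<alpha> d') * (Xc d \<omega> * Xc d' \<omega>) + (\<alpha> d * \<beta> d') * (Xc d \<omega> * Yc d' \<omega>)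
        + (\<beta> d * \<alpha> d') * (Yc d \<omega> * Xc d' \<omega>) + (\<beta> d * \<beta> d') * (Yc d \<omega> * Yc d' \<omega>))"
      unfolding U_def by (rule ext) (simp add: algebra_simps)
    have i1: "integrable M (\<lambda>\<omega>. Xc d \<omega> * Xc d' \<omega>)" using L2_prod_int[OF Xc Xc] d by simp
    have i2: "integrable M (\<lambda>\<omega>. Xc d \<omega> * Yc d' \<omega>)" using L2_prod_int[OF Xc Yc] d by simp
    have i3: "integrable M (\<lambda>\<omega>. Yc d \<omega> * Xc d' \<omega>)" using L2_prod_int[OF Yc Xc] d by simp
    have i4: "integrable M (\<lambda>\<omega>. Yc d \<omega> * Yc d' \<omega>)" using L2_prod_int[OF Yc Yc] d by simp
    show ?thesis unfolding eq cX cY cXY cYX' using i1 i2 i3 i4 by simp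
  qed
  have "integral\<^sup>L M (\<lambda>\<omega>. (\<Sum>d\<in>N. \<alpha> d * (X d \<omega> - integral\<^sup>L M (X d)) + \<beta> d * (Y d \<omega> - integral\<^sup>L M (Y d)))\<^sup>2)
      = integral\<^sup>L M (\<lambda>\<omega>. \<Sum>d\<in>N. \<Sum>d'\<in>N. U d \<omega> * U d' \<omega>)"
    unfolding U_def Xc_def Yc_def by (simp add: power2_eq_square sum_product)
  also have "\<dots> = (\<Sum>d\<in>N. \<Sum>d'\<in>N. integral\<^sup>L M (\<lambda>\<omega>. U d \<omega> * U d' \<omega>))"
  proof -
    have "integral\<^sup>L M (\<lambda>\<omega>. \<Sum>d\<in>N. \<Sum>d'\<in>N. U d \<omega> * U d' \<omega>) = (\<Sum>d\<in>N. integral\<^sup>L M (\<lambda>\<omega>. \<Sum>d'\<in>N. U d \<omega> * U d' \<omega>))"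
      by (rule Bochner_Integration.integral_sum, rule Bochner_Integration.integrable_sum, rule int)
    also have "\<dots> = (\<Sum>d\<in>N. \<Sum>d'\<in>N. integral\<^sup>L M (\<lambda>\<omega>. U d \<omega> * U d' \<omega>))"
      by (rule sum.cong[OF refl], rule Bochner_Integration.integral_sum, rule int)
    finally show ?thesis .
  qed
  also have "\<dots> = (\<Sum>d\<in>N. integral\<^sup>L M (\<lambda>\<omega>. U d \<omega> * U d \<omega>))"
  proof (rule sum.cong[OF refl])
    fix d assume d: "d \<in> N"
    have "(\<Sum>d'\<in>N. integral\<^sup>L M (\<lambda>\<omega>. U d \<omega> * U d' \<omega>)) = integral\<^sup>L M (\<lambda>\<omega>. U d \<omega> * U d \<omega>) + (\<Sum>d'\<in>N - {d}. integral\<^sup>L M (\<lambda>\<omega>. U d \<omega> * U d' \<omega>))"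
      using sum.remove[OF fin d] .
    also have "(\<Sum>d'\<in>N - {d}. integral\<^sup>L M (\<lambda>\<omega>. U d \<omega> * U d' \<omega>)) = 0"
    proof (rule sum.neutral, rule ballI)
      fix d' assume d': "d' \<in> N - {d}"
      then have ne: "d \<noteq> d'" "d' \<in> N" by auto
      have "cov M (X d) (Y d') = 0" using cYX d ne by (metis cov_comm)
      then show "integral\<^sup>L M (\<lambda>\<omega>. U d \<omega> * U d' \<omega>) = 0"
        unfolding EU[OF d ne(2)] using cXX cYY cYX d ne by simp
    qed
    finally show "(\<Sum>d'\<in>N. integral\<^sup>L M (\<lambda>\<omega>. U d \<omega> * U d' \<omega>)) = integral\<^sup>L M (\<lambda>\<omega>. U d \<omega> * U d \<omega>)" by simp
  qed
  also have "\<dots> = (\<Sum>d\<in>N. Tq (cov M (X d) (X d)) (cov M (Y d) (Y d)) (cov M (X d) (Y d)) (\<alpha> d) (\<beta> d))"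
  proof (rule sum.cong[OF refl])
    fix d assume d: "d \<in> N"
    show "integral\<^sup>L M (\<lambda>\<omega>. U d \<omega> * U d \<omega>) = Tq (cov M (X d) (X d)) (cov M (Y d) (Y d)) (cov M (X d) (Y d)) (\<alpha> d) (\<beta> d)"
      unfolding EU[OF d d] Tq_def using cov_comm[of M "Y d" "X d"] by (simp add: power2_eq_square algebra_simps)
  qed
  finally show ?thesis .
qed



theorem theorem8:
  fixes V :: "'v set" and E :: "'v set set" and rt :: 'v
    and r x :: "'v set \<Rightarrow> real" and v0 :: real
    and M :: "'w measure" and p q :: "'v \<Rightarrow> 'w \<Rightarrow> real"
  assumes tree: "is_tree V E"
    and root: "rt \<in> V" "card {c\<in>V. adj E rt c} = 1"
    and r_pos: "\<forall>e\<in>E. r e > 0" and x_pos: "\<forall>e\<in>E. x e > 0"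
    and prob: "prob_space M"
    and p_rv: "\<forall>d\<in>V - {rt}. p d \<in> borel_measurable M \<and> integrable M (\<lambda>\<omega>. (p d \<omega>)\<^sup>2)"
    and q_rv: "\<forall>d\<in>V - {rt}. q d \<in> borel_measurable M \<and> integrable M (\<lambda>\<omega>. (q d \<omega>)\<^sup>2)"
    and cov_p: "\<forall>a\<in>V - {rt}. \<forall>b\<in>V - {rt}. a \<noteq> b \<longrightarrow> cov M (p a) (p b) = 0"
    and cov_q: "\<forall>a\<in>V - {rt}. \<forall>b\<in>V - {rt}. a \<noteq> b \<longrightarrow> cov M (q a) (q b) = 0"
    and cov_qp: "\<forall>a\<in>V - {rt}. \<forall>b\<in>V - {rt}. a \<noteq> b \<longrightarrow> cov M (q a) (p b) = 0"
    and cov_qp_diag: "\<forall>a\<in>V - {rt}. cov M (q a) (p a) \<ge> 0"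
  defines "k1 \<equiv> min ((Min (r ` E))\<^sup>2) ((Min (x ` E))\<^sup>2)
                 * Min ((\<lambda>d. cov M (p d) (p d) + cov M (q d) (q d) + 2 * cov M (p d) (q d)) ` (V - {rt}))"
    and "v \<equiv> lcpf_v V E rt r x v0 p q"
  shows "\<forall>a\<in>V. \<forall>b\<in>V. \<forall>ps. b \<noteq> a \<and> \<not> adj E a b \<and> simple_path E ps \<and> hd ps = a \<and> last ps = b
           \<longrightarrow> phi M v a b \<ge> phi M v a (ps ! 1) + k1"
proof (intro ballI allI impI)
  fix a b ps
  assume aV: "a \<in> V" and bV: "b \<in> V"
    and H: "b \<noteq> a \<and> \<not> adj E a b \<and> simple_path E ps \<and> hd ps = a \<and> last ps = b"
  interpret T: tr V E rt using tree root(1) by unfold_locales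
  interpret P: prob_space M by (rule prob)
  let ?N = "V - {rt}"
  have finN: "finite ?N" using T.finV by simp
  have sp: "simple_path E ps" and ba: "b \<noteq> a" and nab: "\<not> adj E a b" and hd: "hd ps = a" and la: "last ps = b"
    using H by simp_all
  have psne: "ps \<noteq> []" using sp unfolding simple_path_def by simp
  have u0: "ps ! 0 = a" using hd psne by (simp add: hd_conv_nth)
  have uk: "ps ! (length ps - 1) = b" using la psne by (simp add: last_conv_nth)
  have len: "2 \<le> length ps - 1"
  proof (rule ccontr)
    assume "\<not> 2 \<le> length ps - 1"
    then have "length ps = 1 \<or> length ps = 2" using psne by (cases "length ps") auto
    then show False
    proof
      assume "length ps = 1"
      then show False using u0 uk ba by simp
    next
      assume l2: "length ps = 2"
      have "adj E (ps!0) (ps!Suc 0)" using T.sp_adj[OF sp] l2 by simp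
      then show False using u0 uk l2 nab by simp
    qed
  qed
  define c where "c = ps ! 1"
  have ac: "adj E a c" using T.sp_adj[OF sp, of 0] len u0 unfolding c_def by simp
  have cV: "c \<in> V" using T.adj_V[OF ac] by simp
  have Hinv_r: "Hinv V E rt r y d = T.Gf r y d" if "y \<in> V" "d \<in> ?N" for y d
    using T.Hinv_eq[OF r_pos] that T.Gf_rt unfolding T.G0_def by auto
  have Hinv_x: "Hinv V E rt x y d = T.Gf x y d" if "y \<in> V" "d \<in> ?N" for y d
    using T.Hinv_eq[OF x_pos] that T.Gf_rt unfolding T.G0_def by auto
  have pL2: "\<forall>d\<in>?N. p d \<in> L2 M" using p_rv unfolding L2_def by simp
  have qL2: "\<forall>d\<in>?N. q d \<in> L2 M" using q_rv unfolding L2_def by simp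
  have pint: "integrable M (p d)" if "d \<in> ?N" for d using L2_int[OF prob] pL2 that by simp
  have qint: "integrable M (q d)" if "d \<in> ?N" for d using L2_int[OF prob] qL2 that by simp
  have vc: "v y \<omega> - integral\<^sup>L M (v y) = (\<Sum>d\<in>?N. T.Gf r y d * (p d \<omega> - integral\<^sup>L M (p d))
                                          + T.Gf x y d * (q d \<omega> - integral\<^sup>L M (q d)))"
    if yV: "y \<in> V" for y \<omega>
  proof (cases "y = rt")
    case True
    have "v y = (\<lambda>\<omega>. v0)" unfolding v_def lcpf_v_def using True by simp
    then have "v y \<omega> - integral\<^sup>L M (v y) = 0" using P.prob_space by simp
    moreover have "(\<Sum>d\<in>?N. T.Gf r y d * (p d \<omega> - integral\<^sup>L M (p d)) + T.Gf x y d * (q d \<omega> - integral\<^sup>L M (q d))) = 0"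
      using True T.Gf_rt by simp
    ultimately show ?thesis by simp
  next
    case False
    have vy: "v y = (\<lambda>\<omega>. \<Sum>d\<in>?N. T.Gf r y d * p d \<omega> + T.Gf x y d * q d \<omega>)"
      unfolding v_def lcpf_v_def using False Hinv_r[OF yV] Hinv_x[OF yV] by (intro ext) simp
    have "integral\<^sup>L M (v y) = (\<Sum>d\<in>?N. integral\<^sup>L M (\<lambda>\<omega>. T.Gf r y d * p d \<omega> + T.Gf x y d * q d \<omega>))"
      unfolding vy by (rule Bochner_Integration.integral_sum) (use pint qint in simp)
    also have "\<dots> = (\<Sum>d\<in>?N. T.Gf r y d * integral\<^sup>L M (p d) + T.Gf x y d * integral\<^sup>L M (q d))"
      by (rule sum.cong[OF refl]) (use pint qint in simp)
    finally have "v y \<omega> - integral\<^sup>L M (v y) = (\<Sum>d\<in>?N. T.Gf r y d * p d \<omega> + T.Gf x y d * q d \<omega>)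
        - (\<Sum>d\<in>?N. T.Gf r y d * integral\<^sup>L M (p d) + T.Gf x y d * integral\<^sup>L M (q d))"
      unfolding vy by simp
    also have "\<dots> = (\<Sum>d\<in>?N. T.Gf r y d * (p d \<omega> - integral\<^sup>L M (p d)) + T.Gf x y d * (q d \<omega> - integral\<^sup>L M (q d)))"
      unfolding sum_subtractf[symmetric] by (rule sum.cong[OF refl]) (simp add: algebra_simps)
    finally show ?thesis .
  qed
  define sp' where "sp' d = cov M (p d) (p d)" for d
  define sq' where "sq' d = cov M (q d) (q d)" for d
  define spq where "spq d = cov M (p d) (q d)" for d
  have phiF: "phi M v y z = (\<Sum>d\<in>?N. Tq (sp' d) (sq' d) (spq d) (T.Gf r y d - T.Gf r z d) (T.Gf x y d - T.Gf x z d))"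
    if "y \<in> V" "z \<in> V" for y z
  proof -
    have "phi M v y z = integral\<^sup>L M (\<lambda>\<omega>. (\<Sum>d\<in>?N. (T.Gf r y d - T.Gf r z d) * (p d \<omega> - integral\<^sup>L M (p d))
                             + (T.Gf x y d - T.Gf x z d) * (q d \<omega> - integral\<^sup>L M (q d)))\<^sup>2)"
      unfolding phi_def
    proof (rule Bochner_Integration.integral_cong[OF refl])
      fix \<omega>
      show "((v y \<omega> - integral\<^sup>L M (v y)) - (v z \<omega> - integral\<^sup>L M (v z)))\<^sup>2
          = (\<Sum>d\<in>?N. (T.Gf r y d - T.Gf r z d) * (p d \<omega> - integral\<^sup>L M (p d))
                             + (T.Gf x y d - T.Gf x z d) * (q d \<omega> - integral\<^sup>L M (q d)))\<^sup>2"
        unfolding vc[OF that(1)] vc[OF that(2)] sum_subtractf[symmetric]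
        by (rule arg_cong[where f = "\<lambda>t. t\<^sup>2"], rule sum.cong[OF refl]) (simp add: algebra_simps)
    qed
    also have "\<dots> = (\<Sum>d\<in>?N. Tq (sp' d) (sq' d) (spq d) (T.Gf r y d - T.Gf r z d) (T.Gf x y d - T.Gf x z d))"
      unfolding sp'_def sq'_def spq_def
      by (rule var_expand[OF prob finN pL2 qL2 cov_p cov_q cov_qp])
    finally show ?thesis .
  qed
  have sig: "0 \<le> sp' d" "0 \<le> sq' d" "0 \<le> spq d" if "d \<in> ?N" for d
  proof -
    show "0 \<le> sp' d" unfolding sp'_def cov_def by (rule Bochner_Integration.integral_nonneg) simp
    show "0 \<le> sq' d" unfolding sq'_def cov_def by (rule Bochner_Integration.integral_nonneg) simp
    show "0 \<le> spq d" unfolding spq_def using cov_qp_diag that cov_comm by metis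
  qed
  let ?k = "length ps - 1"
  let ?rr = "\<lambda>i. r {ps!i, ps!Suc i}"
  let ?xx = "\<lambda>i. x {ps!i, ps!Suc i}"
  let ?s = "\<lambda>d i. T.sg (ps!i) (ps!Suc i) d"
  have pos: "\<forall>i<?k. ?rr i > 0 \<and> ?xx i > 0"
  proof (intro allI impI)
    fix i assume "i < ?k"
    then have "{ps!i, ps!Suc i} \<in> E" using T.adj_E[OF T.sp_adj[OF sp]] by simp
    then show "?rr i > 0 \<and> ?xx i > 0" using r_pos x_pos by simp
  qed
  have Dab: "T.Gf w a d - T.Gf w b d = (\<Sum>i<?k. w {ps!i, ps!Suc i} * ?s d i)" if "d \<in> ?N" for w d
    using T.path_pot[OF sp, of d w] that u0 uk by simp
  have Dac: "T.Gf w a d - T.Gf w c d = w {ps!0, ps!Suc 0} * ?s d 0" if "d \<in> ?N" for w d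
    using T.Gf_diff[of "ps!0" "ps!Suc 0" d w] ac that u0 unfolding c_def by simp
  have sv: "\<forall>i<?k. ?s d i = 0 \<or> ?s d i = 1 \<or> ?s d i = -1" for d using T.sg_vals by blast
  have termd: "Tq (sp' d) (sq' d) (spq d) (T.Gf r a d - T.Gf r c d) (T.Gf x a d - T.Gf x c d)
      \<le> Tq (sp' d) (sq' d) (spq d) (T.Gf r a d - T.Gf r b d) (T.Gf x a d - T.Gf x b d)" if d: "d \<in> ?N" for d
    unfolding Dab[OF d] Dac[OF d]
    by (rule per_d(1)[OF len sv T.sg_sign[OF sp] pos sig[OF d]])
  define rmin where "rmin = Min (r ` E)"
  define xmin where "xmin = Min (x ` E)"
  have e1: "{ps!1, ps!Suc 1} \<in> E" using T.adj_E[OF T.sp_adj[OF sp, of 1]] len by simp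
  have Ene: "E \<noteq> {}" using e1 by auto
  have rmin: "0 < rmin" "rmin \<le> ?rr 1"
  proof -
    have "rmin \<in> r ` E" unfolding rmin_def using T.finE Ene by simp
    then show "0 < rmin" using r_pos by auto
    show "rmin \<le> ?rr 1" unfolding rmin_def using T.finE e1 by simp
  qed
  have xmin: "0 < xmin" "xmin \<le> ?xx 1"
  proof -
    have "xmin \<in> x ` E" unfolding xmin_def using T.finE Ene by simp
    then show "0 < xmin" using x_pos by auto
    show "xmin \<le> ?xx 1" unfolding xmin_def using T.finE e1 by simp
  qed
  obtain ds where ds: "ds \<in> ?N" "?s ds 1 \<noteq> 0"
  proof (cases "T.conn {ps!1, ps!Suc 1} rt (ps!1)")
    case True
    have br: "\<not> T.conn {ps!1, ps!Suc 1} (ps!1) (ps!Suc 1)" using T.bridge[OF e1] .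
    have n1: "\<not> T.conn {ps!1, ps!Suc 1} (ps!Suc 1) (ps!1)" using br T.conn_sym by blast
    have "ps!Suc 1 \<noteq> rt" using True n1 by auto
    moreover have "ps!Suc 1 \<in> V" using T.edge_V[OF e1] by simp
    moreover have "?s (ps!Suc 1) 1 \<noteq> 0" unfolding T.sg_def using True n1 by simp
    ultimately show ?thesis using that by blast
  next
    case False
    have "ps!1 \<noteq> rt" using False by auto
    moreover have "ps!1 \<in> V" using T.edge_V[OF e1] by simp
    moreover have "?s (ps!1) 1 \<noteq> 0" unfolding T.sg_def using False by simp
    ultimately show ?thesis using that by blast
  qed
  let ?m = "min (rmin\<^sup>2) (xmin\<^sup>2)"
  let ?val = "\<lambda>d. cov M (p d) (p d) + cov M (q d) (q d) + 2 * cov M (p d) (q d)"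
  have special: "Tq (sp' ds) (sq' ds) (spq ds) (T.Gf r a ds - T.Gf r c ds) (T.Gf x a ds - T.Gf x c ds) + ?m * ?val ds
      \<le> Tq (sp' ds) (sq' ds) (spq ds) (T.Gf r a ds - T.Gf r b ds) (T.Gf x a ds - T.Gf x b ds)"
    unfolding Dab[OF ds(1)] Dac[OF ds(1)]
    using per_d(2)[OF len sv T.sg_sign[OF sp] pos sig[OF ds(1)] ds(2) rmin(2) xmin(2) rmin(1) xmin(1)]
    unfolding sp'_def sq'_def spq_def by simp
  have k1: "k1 \<le> ?m * ?val ds"
  proof -
    have "Min (?val ` ?N) \<le> ?val ds" using finN ds(1) by simp
    moreover have "0 \<le> ?m" by simp
    ultimately show ?thesis unfolding k1_def rmin_def[symmetric] xmin_def[symmetric] by (rule mult_left_mono)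
  qed
  let ?D = "\<lambda>d. Tq (sp' d) (sq' d) (spq d) (T.Gf r a d - T.Gf r b d) (T.Gf x a d - T.Gf x b d)
             - Tq (sp' d) (sq' d) (spq d) (T.Gf r a d - T.Gf r c d) (T.Gf x a d - T.Gf x c d)"
  have "phi M v a b - phi M v a c = (\<Sum>d\<in>?N. ?D d)"
    unfolding phiF[OF aV bV] phiF[OF aV cV] sum_subtractf ..
  moreover have "?D ds \<le> (\<Sum>d\<in>?N. ?D d)"
    by (rule member_le_sum[OF ds(1)]) (use termd finN in auto)
  ultimately have "?m * ?val ds \<le> phi M v a b - phi M v a c" using special by linarith
  then show "phi M v a (ps ! 1) + k1 \<le> phi M v a b" using k1 unfolding c_def by linarith
qed


end
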